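(* Let $K$ be an $\mathcal R$-dioid (i.e., a $*$-continuous Kleene algebra). For each $\phi\in K\otimes_{\mathcal R}C_2'$ there are $n\in\mathbb N$, $S\in\{0,1\}^{1\times n}$, $F\in\{0,1\}^{n\times 1}$, $U\in\{0,b,p\}^{n\times n}$, $V\in\{0,d,q\}^{n\times n}$ and $X\in K^{n\times n}$ such that \[ \phi=S(U+X+V)^*F \] (computed in the matrix Kleene algebra over $K\otimes_{\mathcal R}C_2'$).
   Context: An $\mathcal R$-dioid is a dioid in which every regular subset of its multiplicative monoid has a supremum $\sum A$ with $\sum(AB)=(\sum A)(\sum B)$; equivalently a $*$-continuous Kleene algebra. An $\mathcal R$-congruence is a semiring congruence such that regular sets with equal downward closures modulo it have congruent suprema. $C_2'=\mathcal R\Delta_2^*/\rho$ where $\Delta_2=\{b,p,d,q\}$, $\mathcal R\Delta_2^*$ is the algebra of regular languages over $\Delta_2$, and $\rho$ is the least $\mathcal R$-congruence containing $bd=pq=1$, $bq=pd=0$. $K\otimes_{\mathcal R}C_2'$ is the tensor product of $\mathcal R$-dioids (universal $\mathcal R$-dioid with $\mathcal R$-morphisms from $K$ and $C_2'$ whose images commute elementwise); elements of $K$ and $C_2'$ are identified with their images. Matrices over a Kleene algebra form a Kleene algebra with matrix sum, product and the standard (block-recursive) matrix star. *)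

theory Defs
  imports Main
begin

class dioid = semiring_0 + monoid_mult +
  assumes add_idem: "x + x = x"

context dioid
begin

definition dle :: "'a \<Rightarrow> 'a \<Rightarrow> bool" where
  "dle x y \<longleftrightarrow> x + y = y"

definition is_lub :: "'a set \<Rightarrow> 'a \<Rightarrow> bool" where
  "is_lub A s \<longleftrightarrow> (\<forall>a\<in>A. dle a s) \<and> (\<forall>u. (\<forall>a\<in>A. dle a u) \<longrightarrow> dle s u)"

definition rsum :: "'a set \<Rightarrow> 'a" where
  "rsum A = (THE s. is_lub A s)"

definition set_times :: "'a set \<Rightarrow> 'a set \<Rightarrow> 'a set" where
  "set_times A B = {x * y | x y. x \<in> A \<and> y \<in> B}"

inductive_set submonoid_gen :: "'a set \<Rightarrow> 'a set" for A where
  sg_one: "1 \<in> submonoid_gen A"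
| sg_step: "a \<in> A \<Longrightarrow> x \<in> submonoid_gen A \<Longrightarrow> a * x \<in> submonoid_gen A"

inductive regular_set :: "'a set \<Rightarrow> bool" where
  reg_finite: "finite A \<Longrightarrow> regular_set A"
| reg_union: "regular_set A \<Longrightarrow> regular_set B \<Longrightarrow> regular_set (A \<union> B)"
| reg_times: "regular_set A \<Longrightarrow> regular_set B \<Longrightarrow> regular_set (set_times A B)"
| reg_star: "regular_set A \<Longrightarrow> regular_set (submonoid_gen A)"

end

class r_dioid = dioid +
  assumes r_sup_exists: "regular_set (A::'a set) \<Longrightarrow> \<exists>s. is_lub A s"
  and r_sup_mult: "regular_set (A::'a set) \<Longrightarrow> regular_set (B::'a set) \<Longrightarrow>
                   rsum (set_times A B) = rsum A * rsum B"

definition kstar :: "'a::r_dioid \<Rightarrow> 'a" where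
  "kstar a = rsum (submonoid_gen {a})"

section \<open>Regular languages: the free R-dioid R X*\<close>

definition conc :: "'x list set \<Rightarrow> 'x list set \<Rightarrow> 'x list set" where
  "conc L M = {u @ v | u v. u \<in> L \<and> v \<in> M}"

inductive_set lstar :: "'x list set \<Rightarrow> 'x list set" for L where
  lstar_nil: "[] \<in> lstar L"
| lstar_step: "u \<in> L \<Longrightarrow> v \<in> lstar L \<Longrightarrow> u @ v \<in> lstar L"

inductive reg_lang :: "'x list set \<Rightarrow> bool" where
  rl_finite: "finite L \<Longrightarrow> reg_lang L"
| rl_union: "reg_lang L \<Longrightarrow> reg_lang M \<Longrightarrow> reg_lang (L \<union> M)"
| rl_conc: "reg_lang L \<Longrightarrow> reg_lang M \<Longrightarrow> reg_lang (conc L M)"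
| rl_star: "reg_lang L \<Longrightarrow> reg_lang (lstar L)"

text \<open>Regular subsets of the multiplicative monoid of R X*.\<close>
definition fam_times :: "'x list set set \<Rightarrow> 'x list set set \<Rightarrow> 'x list set set" where
  "fam_times \<A> \<B> = {conc L M | L M. L \<in> \<A> \<and> M \<in> \<B>}"

inductive_set fam_star :: "'x list set set \<Rightarrow> 'x list set set" for \<A> where
  fs_one: "{[]} \<in> fam_star \<A>"
| fs_step: "L \<in> \<A> \<Longrightarrow> M \<in> fam_star \<A> \<Longrightarrow> conc L M \<in> fam_star \<A>"

inductive reg_fam :: "'x list set set \<Rightarrow> bool" where
  rf_finite: "finite \<A> \<Longrightarrow> (\<forall>L\<in>\<A>. reg_lang L) \<Longrightarrow> reg_fam \<A>"
| rf_union: "reg_fam \<A> \<Longrightarrow> reg_fam \<B> \<Longrightarrow> reg_fam (\<A> \<union> \<B>)"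
| rf_times: "reg_fam \<A> \<Longrightarrow> reg_fam \<B> \<Longrightarrow> reg_fam (fam_times \<A> \<B>)"
| rf_star: "reg_fam \<A> \<Longrightarrow> reg_fam (fam_star \<A>)"

text \<open>R-congruences on R X*: semiring congruences such that regular sets with
  equal downward closures modulo the congruence have congruent suprema (unions).
  In the quotient, [L] \<le> [M] iff (L \<union> M, M) is in the congruence.\<close>
definition r_congruence :: "('x list set \<times> 'x list set) set \<Rightarrow> bool" where
  "r_congruence \<theta> \<longleftrightarrow>
     equiv {L. reg_lang L} \<theta> \<and>
     (\<forall>L L' M M'. (L, L') \<in> \<theta> \<longrightarrow> (M, M') \<in> \<theta> \<longrightarrow>
        (L \<union> M, L' \<union> M') \<in> \<theta> \<and> (conc L M, conc L' M') \<in> \<theta>) \<and>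
     (\<forall>\<A> \<B>. reg_fam \<A> \<longrightarrow> reg_fam \<B> \<longrightarrow>
        (\<forall>L\<in>\<A>. \<exists>M\<in>\<B>. (L \<union> M, M) \<in> \<theta>) \<longrightarrow>
        (\<forall>M\<in>\<B>. \<exists>L\<in>\<A>. (M \<union> L, L) \<in> \<theta>) \<longrightarrow>
        (\<Union>\<A>, \<Union>\<B>) \<in> \<theta>)"

definition least_r_congruence :: "('x list set \<times> 'x list set) set \<Rightarrow> ('x list set \<times> 'x list set) set" where
  "least_r_congruence R0 = \<Inter> {\<theta>. r_congruence \<theta> \<and> R0 \<subseteq> \<theta>}"

datatype delta = Db | Dp | Dd | Dq

text \<open>Presentation of K \<otimes>_R C_2' as a quotient of the free R-dioid on the
  alphabet K + \<Delta>_2: relations of C_2', relations making the inclusion of K an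
  R-morphism (0, 1, +, *, star), and commutation of K with the generators of C_2'.\<close>
definition tens_rel :: "(('k::r_dioid + delta) list set \<times> ('k + delta) list set) set" where
  "tens_rel =
     {({[Inr Db, Inr Dd]}, {[]}), ({[Inr Dp, Inr Dq]}, {[]}),
      ({[Inr Db, Inr Dq]}, {}), ({[Inr Dp, Inr Dd]}, {})}
   \<union> {({[Inl 0]}, {}), ({[Inl 1]}, {[]})}
   \<union> {({[Inl (x + y)]}, {[Inl x], [Inl y]}) | x y. True}
   \<union> {({[Inl (x * y)]}, {[Inl x, Inl y]}) | x y. True}
   \<union> {({[Inl (kstar x)]}, lstar {[Inl x]}) | x. True}
   \<union> {({[Inl k, Inr e]}, {[Inr e, Inl k]}) | k e. True}"

definition tens_cong :: "(('k::r_dioid + delta) list set \<times> ('k + delta) list set) set" where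
  "tens_cong = least_r_congruence tens_rel"

definition tensor_carrier :: "('k::r_dioid + delta) list set set set" where
  "tensor_carrier = {L. reg_lang L} // tens_cong"

definition tcls :: "('k::r_dioid + delta) list set \<Rightarrow> ('k + delta) list set set" where
  "tcls L = tens_cong `` {L}"

definition trep :: "('k::r_dioid + delta) list set set \<Rightarrow> ('k + delta) list set" where
  "trep x = (SOME L. L \<in> x)"

definition t_zero :: "('k::r_dioid + delta) list set set" where
  "t_zero = tcls {}"

definition t_one :: "('k::r_dioid + delta) list set set" where
  "t_one = tcls {[]}"

definition t_plus :: "('k::r_dioid + delta) list set set \<Rightarrow> ('k + delta) list set set \<Rightarrow> ('k + delta) list set set" where
  "t_plus x y = tcls (trep x \<union> trep y)"

definition t_times :: "('k::r_dioid + delta) list set set \<Rightarrow> ('k + delta) list set set \<Rightarrow> ('k + delta) list set set" where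
  "t_times x y = tcls (conc (trep x) (trep y))"

definition t_star :: "('k::r_dioid + delta) list set set \<Rightarrow> ('k + delta) list set set" where
  "t_star x = tcls (lstar (trep x))"

definition embK :: "'k::r_dioid \<Rightarrow> ('k + delta) list set set" where
  "embK k = tcls {[Inl k]}"

definition gen :: "delta \<Rightarrow> ('k::r_dioid + delta) list set set" where
  "gen e = tcls {[Inr e]}"

type_synonym 'k tmat = "nat \<Rightarrow> nat \<Rightarrow> ('k + delta) list set set"

fun t_sum :: "nat \<Rightarrow> (nat \<Rightarrow> ('k::r_dioid + delta) list set set) \<Rightarrow> ('k + delta) list set set" where
  "t_sum 0 f = t_zero"
| "t_sum (Suc n) f = t_plus (t_sum n f) (f n)"

text \<open>Standard block-recursive matrix star for n\<times>n matrices (indices < n),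
  splitting off the first row and column:
  [[a,B],[C,D]]* = [[e, e B D*],[D* C e, D* + D* C e B D*]], e = (a + B D* C)*.\<close>
fun mat_star :: "nat \<Rightarrow> ('k::r_dioid) tmat \<Rightarrow> 'k tmat" where
  "mat_star 0 M = (\<lambda>i j. t_zero)"
| "mat_star (Suc n) M =
     (let a = M 0 0;
          B = (\<lambda>j. M 0 (Suc j));
          C = (\<lambda>i. M (Suc i) 0);
          Ds = mat_star n (\<lambda>i j. M (Suc i) (Suc j));
          BDs = (\<lambda>j. t_sum n (\<lambda>k. t_times (B k) (Ds k j)));
          DsC = (\<lambda>i. t_sum n (\<lambda>k. t_times (Ds i k) (C k)));
          e = t_star (t_plus a (t_sum n (\<lambda>k. t_times (BDs k) (C k))))
      in (\<lambda>i j. if i = 0 \<and> j = 0 then e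
               else if i = 0 then t_times e (BDs (j - 1))
               else if j = 0 then t_times (DsC (i - 1)) e
               else t_plus (Ds (i - 1) (j - 1))
                           (t_times (DsC (i - 1)) (t_times e (BDs (j - 1))))))"

definition row_mat_col :: "nat \<Rightarrow> (nat \<Rightarrow> ('k::r_dioid + delta) list set set) \<Rightarrow> 'k tmat \<Rightarrow>
    (nat \<Rightarrow> ('k + delta) list set set) \<Rightarrow> ('k + delta) list set set" where
  "row_mat_col n S M F = t_sum n (\<lambda>j. t_times (t_sum n (\<lambda>i. t_times (S i) (M i j))) (F j))"

end

theory Submission
  imports Defs
begin

abbreviation "Reg \<equiv> {L. reg_lang L}"

lemma rc_equiv: "r_congruence \<theta> \<Longrightarrow> equiv Reg \<theta>" by (simp add: r_congruence_def)
lemma rc_compat: "r_congruence \<theta> \<Longrightarrow> (L, L') \<in> \<theta> \<Longrightarrow> (M, M') \<in> \<theta> \<Longrightarrow>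
   (L \<union> M, L' \<union> M') \<in> \<theta> \<and> (conc L M, conc L' M') \<in> \<theta>"
  by (simp add: r_congruence_def)
lemma rc_sup: "r_congruence \<theta> \<Longrightarrow> reg_fam A \<Longrightarrow> reg_fam B \<Longrightarrow> (\<forall>L\<in>A. \<exists>M\<in>B. (L \<union> M, M) \<in> \<theta>)
  \<Longrightarrow> (\<forall>M\<in>B. \<exists>L\<in>A. (M \<union> L, L) \<in> \<theta>) \<Longrightarrow> (\<Union>A, \<Union>B) \<in> \<theta>"
  unfolding r_congruence_def by blast
lemma rc_sub: "r_congruence \<theta> \<Longrightarrow> (L,M) \<in> \<theta> \<Longrightarrow> reg_lang L \<and> reg_lang M"
  using rc_equiv equiv_type by blast
lemma rc_refl: "r_congruence \<theta> \<Longrightarrow> reg_lang L \<Longrightarrow> (L,L) \<in> \<theta>"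
  using rc_equiv unfolding equiv_def refl_on_def by blast
lemma rc_sym: "r_congruence \<theta> \<Longrightarrow> (L,M) \<in> \<theta> \<Longrightarrow> (M,L) \<in> \<theta>"
  using rc_equiv unfolding equiv_def by (meson symD)
lemma rc_trans: "r_congruence \<theta> \<Longrightarrow> (L,M) \<in> \<theta> \<Longrightarrow> (M,N) \<in> \<theta> \<Longrightarrow> (L,N) \<in> \<theta>"
  using rc_equiv unfolding equiv_def by (meson transD)

lemma fam_star_sub: "X \<in> fam_star {L} \<Longrightarrow> X \<subseteq> lstar L"
  by (induction rule: fam_star.induct) (auto simp: conc_def intro: lstar.intros)

lemma lstar_sub_fam: "w \<in> lstar L \<Longrightarrow> \<exists>X\<in>fam_star {L}. w \<in> X"
proof (induction rule: lstar.induct)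
  case lstar_nil
  then show ?case using fam_star.fs_one by blast
next
  case (lstar_step u v)
  then obtain X where X: "X \<in> fam_star {L}" "v \<in> X" by blast
  have "conc L X \<in> fam_star {L}" using X(1) by (auto intro: fam_star.fs_step)
  moreover have "u @ v \<in> conc L X" using X(2) lstar_step(1) by (auto simp: conc_def)
  ultimately show ?case by blast
qed

lemma Union_fam_star: "\<Union>(fam_star {L}) = lstar L"
  using fam_star_sub lstar_sub_fam by blast

lemma fam_star_rel: assumes "r_congruence \<theta>" "(L,L') \<in> \<theta>"
  shows "X \<in> fam_star {L} \<Longrightarrow> \<exists>Y\<in>fam_star {L'}. (X,Y) \<in> \<theta>"
proof (induction rule: fam_star.induct)
  case fs_one
  have "reg_lang {[]}" by (rule rl_finite) simp
  then have "({[]},{[]}) \<in> \<theta>" using rc_refl[OF assms(1)] by blast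
  then show ?case using fam_star.fs_one by blast
next
  case (fs_step A M)
  then obtain Y where "Y \<in> fam_star {L'}" "(M,Y) \<in> \<theta>" by blast
  moreover have "A = L" using fs_step by simp
  ultimately show ?case using rc_compat[OF assms(1) assms(2)] fam_star.fs_step[of L' "{L'}" Y] by blast
qed

lemma rc_star: assumes "r_congruence \<theta>" "(L,L') \<in> \<theta>" shows "(lstar L, lstar L') \<in> \<theta>"
proof -
  have r: "reg_lang L" "reg_lang L'" using rc_sub[OF assms] by auto
  have sym: "(L',L) \<in> \<theta>" using rc_sym[OF assms] .
  have dom: "\<forall>X\<in>fam_star {A}. \<exists>Y\<in>fam_star {B}. (X \<union> Y, Y) \<in> \<theta>" if AB: "(A,B) \<in> \<theta>" for A B
  proof
    fix X assume X: "X \<in> fam_star {A}"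
    obtain Y where Y: "Y \<in> fam_star {B}" "(X,Y) \<in> \<theta>" using fam_star_rel[OF assms(1) AB X] by blast
    have "(Y,Y) \<in> \<theta>" using rc_trans[OF assms(1) rc_sym[OF assms(1) Y(2)] Y(2)] .
    then have "(X \<union> Y, Y \<union> Y) \<in> \<theta>" using rc_compat[OF assms(1) Y(2)] by blast
    then show "\<exists>Y\<in>fam_star {B}. (X \<union> Y, Y) \<in> \<theta>" using Y(1) by auto
  qed
  have "(\<Union>(fam_star {L}), \<Union>(fam_star {L'})) \<in> \<theta>"
  proof (rule rc_sup[OF assms(1)])
    show "reg_fam (fam_star {L})" using r(1) by (intro rf_star rf_finite) auto
    show "reg_fam (fam_star {L'})" using r(2) by (intro rf_star rf_finite) auto
    show "\<forall>X\<in>fam_star {L}. \<exists>Y\<in>fam_star {L'}. (X \<union> Y, Y) \<in> \<theta>" using dom[OF assms(2)] .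
    show "\<forall>X\<in>fam_star {L'}. \<exists>Y\<in>fam_star {L}. (X \<union> Y, Y) \<in> \<theta>" using dom[OF sym] .
  qed
  then show ?thesis by (simp add: Union_fam_star)
qed

abbreviation "HH \<equiv> (\<lambda>(x::'k::r_dioid itself). \<exists>\<theta>. r_congruence \<theta> \<and> (tens_rel :: (('k + delta) list set \<times> _) set) \<subseteq> \<theta>)"

lemma tc_eq: "tens_cong = \<Inter>{\<theta>. r_congruence \<theta> \<and> tens_rel \<subseteq> \<theta>}"
  by (simp add: tens_cong_def least_r_congruence_def)

lemma tc_mem: "(\<And>\<theta>. r_congruence \<theta> \<Longrightarrow> tens_rel \<subseteq> \<theta> \<Longrightarrow> x \<in> \<theta>) \<Longrightarrow> x \<in> tens_cong"
  unfolding tc_eq by blast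
lemma tc_memD: "x \<in> tens_cong \<Longrightarrow> r_congruence \<theta> \<Longrightarrow> tens_rel \<subseteq> \<theta> \<Longrightarrow> x \<in> \<theta>"
  unfolding tc_eq by blast

context
  fixes dummy :: "'k::r_dioid itself"
  assumes H: "\<exists>\<theta>. r_congruence \<theta> \<and> (tens_rel :: (('k + delta) list set \<times> _) set) \<subseteq> \<theta>"
begin

lemma tc_sub: "(L, M) \<in> (tens_cong :: (('k + delta) list set \<times> _) set) \<Longrightarrow> reg_lang L \<and> reg_lang M"
proof -
  assume a: "(L, M) \<in> (tens_cong :: (('k + delta) list set \<times> _) set)"
  obtain \<theta> where t: "r_congruence \<theta>" "(tens_rel :: (('k + delta) list set \<times> _) set) \<subseteq> \<theta>" using H by blast
  have "(L, M) \<in> \<theta>" by (rule tc_memD[OF a t])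
  then show ?thesis using rc_sub[OF t(1)] by blast
qed

lemma tc_refl: "reg_lang (L :: ('k + delta) list set) \<Longrightarrow> (L, L) \<in> tens_cong"
  by (meson tc_mem rc_refl)

lemma tc_sym: "(L, M) \<in> (tens_cong :: (('k + delta) list set \<times> _) set) \<Longrightarrow> (M, L) \<in> tens_cong"
  by (meson tc_mem tc_memD rc_sym)

lemma tc_trans: "(L, M) \<in> (tens_cong :: (('k + delta) list set \<times> _) set) \<Longrightarrow> (M, N) \<in> tens_cong \<Longrightarrow> (L, N) \<in> tens_cong"
  by (meson tc_mem tc_memD rc_trans)

lemma tc_compat: "(L, L') \<in> (tens_cong :: (('k + delta) list set \<times> _) set) \<Longrightarrow> (M, M') \<in> tens_cong \<Longrightarrow>
   (L \<union> M, L' \<union> M') \<in> tens_cong \<and> (conc L M, conc L' M') \<in> tens_cong"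
  by (meson tc_mem tc_memD rc_compat)

lemma tc_star: "(L, L') \<in> (tens_cong :: (('k + delta) list set \<times> _) set) \<Longrightarrow> (lstar L, lstar L') \<in> tens_cong"
  by (meson tc_mem tc_memD rc_star)

lemma tc_rel: "(tens_rel :: (('k + delta) list set \<times> _) set) \<subseteq> tens_cong"
  unfolding tc_eq by blast

lemma tc_equiv: "equiv Reg (tens_cong :: (('k + delta) list set \<times> _) set)"
proof (rule equivI)
  show "(tens_cong :: (('k + delta) list set \<times> _) set) \<subseteq> Reg \<times> Reg" using tc_sub by auto
  show "refl_on Reg (tens_cong :: (('k + delta) list set \<times> _) set)" unfolding refl_on_def using tc_refl by blast
  show "sym (tens_cong :: (('k + delta) list set \<times> _) set)" by (rule symI) (rule tc_sym)
  show "trans (tens_cong :: (('k + delta) list set \<times> _) set)" by (rule transI) (rule tc_trans)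
qed

lemma tcls_eq: "(L, M) \<in> (tens_cong :: (('k + delta) list set \<times> _) set) \<Longrightarrow> tcls L = tcls M"
  unfolding tcls_def using tc_equiv equiv_class_eq_iff by metis

lemma trep_tcls: "reg_lang (L :: ('k + delta) list set) \<Longrightarrow> (L, trep (tcls L)) \<in> tens_cong"
proof -
  assume r: "reg_lang L"
  have "L \<in> tcls L" unfolding tcls_def using tc_refl[OF r] by blast
  then have "trep (tcls L) \<in> tcls L" unfolding trep_def by (rule someI)
  then show ?thesis unfolding tcls_def by blast
qed

lemma t_plus_tcls: "reg_lang (L :: ('k + delta) list set) \<Longrightarrow> reg_lang M \<Longrightarrow> t_plus (tcls L) (tcls M) = tcls (L \<union> M)"
proof -
  assume "reg_lang L" "reg_lang M"
  then have "(L \<union> M, trep (tcls L) \<union> trep (tcls M)) \<in> tens_cong" using trep_tcls tc_compat by blast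
  then show ?thesis unfolding t_plus_def using tcls_eq by metis
qed

lemma t_times_tcls: "reg_lang (L :: ('k + delta) list set) \<Longrightarrow> reg_lang M \<Longrightarrow> t_times (tcls L) (tcls M) = tcls (conc L M)"
proof -
  assume "reg_lang L" "reg_lang M"
  then have "(conc L M, conc (trep (tcls L)) (trep (tcls M))) \<in> tens_cong" using trep_tcls tc_compat by blast
  then show ?thesis unfolding t_times_def using tcls_eq by metis
qed

lemma t_star_tcls: "reg_lang (L :: ('k + delta) list set) \<Longrightarrow> t_star (tcls L) = tcls (lstar L)"
proof -
  assume "reg_lang L"
  then have "(lstar L, lstar (trep (tcls L))) \<in> tens_cong" using trep_tcls tc_star by blast
  then show ?thesis unfolding t_star_def using tcls_eq by metis
qed

end


lemma concI: "u \<in> A \<Longrightarrow> v \<in> B \<Longrightarrow> u @ v \<in> conc A B"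
  unfolding conc_def by blast
lemma concE: "w \<in> conc A B \<Longrightarrow> (\<And>u v. w = u @ v \<Longrightarrow> u \<in> A \<Longrightarrow> v \<in> B \<Longrightarrow> P) \<Longrightarrow> P"
  unfolding conc_def by blast
lemma conc_assoc: "conc (conc A B) C = conc A (conc B C)"
  unfolding conc_def by (auto, metis append.assoc, metis append.assoc)

inductive pl :: "nat \<Rightarrow> (nat \<Rightarrow> nat \<Rightarrow> 'a list set) \<Rightarrow> nat \<Rightarrow> 'a list \<Rightarrow> nat \<Rightarrow> bool"
  for n M where
  pl_refl: "i < n \<Longrightarrow> pl n M i [] i"
| pl_step: "i < n \<Longrightarrow> k < n \<Longrightarrow> u \<in> M i k \<Longrightarrow> pl n M k v j \<Longrightarrow> pl n M i (u @ v) j"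

definition plang :: "nat \<Rightarrow> (nat \<Rightarrow> nat \<Rightarrow> 'a list set) \<Rightarrow> nat \<Rightarrow> nat \<Rightarrow> 'a list set" where
  "plang n M i j = {w. pl n M i w j}"

lemma pl_bounds: "pl n M i w j \<Longrightarrow> i < n \<and> j < n"
  by (induction rule: pl.induct) auto

lemma pl_trans: "pl n M i u k \<Longrightarrow> pl n M k v j \<Longrightarrow> pl n M i (u @ v) j"
proof (induction rule: pl.induct)
  case (pl_refl i) then show ?case by simp
next
  case (pl_step i k' u' v' j')
  then show ?case using pl.pl_step[of i n k' u' M "v' @ v" j] by simp
qed

lemma pl_single: "i < n \<Longrightarrow> j < n \<Longrightarrow> u \<in> M i j \<Longrightarrow> pl n M i u j"
  using pl_step[of i n j u M "[]" j] pl_refl[of j n M] by simp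

lemma pl_lift: "pl n (\<lambda>i j. M (Suc i) (Suc j)) i w j \<Longrightarrow> pl (Suc n) M (Suc i) w (Suc j)"
  by (induction rule: pl.induct) (auto intro: pl.intros)

lemma pl_lstar: "w \<in> lstar G \<Longrightarrow> (\<And>u. u \<in> G \<Longrightarrow> pl n M i u i) \<Longrightarrow> i < n \<Longrightarrow> pl n M i w i"
  by (induction rule: lstar.induct) (auto intro: pl.intros pl_trans)

definition Dm :: "(nat \<Rightarrow> nat \<Rightarrow> 'a list set) \<Rightarrow> nat \<Rightarrow> nat \<Rightarrow> 'a list set" where
  "Dm M = (\<lambda>i j. M (Suc i) (Suc j))"
definition bds :: "nat \<Rightarrow> (nat \<Rightarrow> nat \<Rightarrow> 'a list set) \<Rightarrow> nat \<Rightarrow> 'a list set" where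
  "bds n M j = (\<Union>k<n. conc (M 0 (Suc k)) (plang n (Dm M) k j))"
definition dsc :: "nat \<Rightarrow> (nat \<Rightarrow> nat \<Rightarrow> 'a list set) \<Rightarrow> nat \<Rightarrow> 'a list set" where
  "dsc n M i = (\<Union>k<n. conc (plang n (Dm M) i k) (M (Suc k) 0))"
definition gg :: "nat \<Rightarrow> (nat \<Rightarrow> nat \<Rightarrow> 'a list set) \<Rightarrow> 'a list set" where
  "gg n M = M 0 0 \<union> (\<Union>k<n. conc (bds n M k) (M (Suc k) 0))"
definition ee :: "nat \<Rightarrow> (nat \<Rightarrow> nat \<Rightarrow> 'a list set) \<Rightarrow> 'a list set" where
  "ee n M = lstar (gg n M)"
definition rr :: "nat \<Rightarrow> (nat \<Rightarrow> nat \<Rightarrow> 'a list set) \<Rightarrow> nat \<Rightarrow> 'a list set" where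
  "rr n M j = (if j = 0 then {[]} else bds n M (j - 1))"

lemma ee_nil: "[] \<in> ee n M"
  unfolding ee_def by (rule lstar_nil)
lemma ee_step: "u \<in> gg n M \<Longrightarrow> v \<in> ee n M \<Longrightarrow> u @ v \<in> ee n M"
  unfolding ee_def by (rule lstar_step)

lemma block_sub:
  assumes "pl (Suc n) M i w j"
  shows "(i = 0 \<longrightarrow> w \<in> conc (ee n M) (rr n M j)) \<and>
         (\<forall>i'. i = Suc i' \<longrightarrow> ((\<exists>j'. j = Suc j' \<and> w \<in> plang n (Dm M) i' j') \<or>
                                w \<in> conc (dsc n M i') (conc (ee n M) (rr n M j))))"
  using assms
proof (induction rule: pl.induct)
  case (pl_refl i)
  show ?case
  proof (intro conjI impI allI)
    assume "i = 0" then show "[] \<in> conc (ee n M) (rr n M i)"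
      using concI[OF ee_nil, of "[]" "{[]}" n M] by (simp add: rr_def)
  next
    fix i' assume "i = Suc i'"
    then have "pl n (Dm M) i' [] i'" using pl_refl by (auto intro: pl.pl_refl)
    then show "(\<exists>j'. i = Suc j' \<and> [] \<in> plang n (Dm M) i' j') \<or> [] \<in> conc (dsc n M i') (conc (ee n M) (rr n M i))"
      using \<open>i = Suc i'\<close> by (auto simp: plang_def)
  qed
next
  case (pl_step i k u v j)
  show ?case
  proof (intro conjI impI allI)
    assume i0: "i = 0"
    show "u @ v \<in> conc (ee n M) (rr n M j)"
    proof (cases k)
      case 0
      with pl_step.IH have "v \<in> conc (ee n M) (rr n M j)" by simp
      then obtain e r where v: "v = e @ r" "e \<in> ee n M" "r \<in> rr n M j" by (rule concE)
      have "u \<in> gg n M" using pl_step.hyps(3) i0 0 by (simp add: gg_def)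
      then have "u @ e \<in> ee n M" using v(2) by (rule ee_step)
      then show ?thesis using v concI by fastforce
    next
      case (Suc k')
      have uB: "u \<in> M 0 (Suc k')" using pl_step.hyps(3) i0 Suc by simp
      have k'n: "k' < n" using pl_step.hyps(2) Suc by simp
      from pl_step.IH Suc have
        "(\<exists>j'. j = Suc j' \<and> v \<in> plang n (Dm M) k' j') \<or> v \<in> conc (dsc n M k') (conc (ee n M) (rr n M j))"
        by simp
      then show ?thesis
      proof
        assume "\<exists>j'. j = Suc j' \<and> v \<in> plang n (Dm M) k' j'"
        then obtain j' where j': "j = Suc j'" "v \<in> plang n (Dm M) k' j'" by blast
        have "u @ v \<in> bds n M j'" unfolding bds_def using uB j'(2) k'n concI by blast
        then have "[] @ (u @ v) \<in> conc (ee n M) (rr n M j)"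
          using j'(1) by (intro concI ee_nil) (simp add: rr_def)
        then show ?thesis by simp
      next
        assume "v \<in> conc (dsc n M k') (conc (ee n M) (rr n M j))"
        then obtain x y where xy: "v = x @ y" "x \<in> dsc n M k'" "y \<in> conc (ee n M) (rr n M j)"
          by (rule concE)
        from xy(3) obtain e r where er: "y = e @ r" "e \<in> ee n M" "r \<in> rr n M j" by (rule concE)
        from xy(2) obtain l where l: "l < n" "x \<in> conc (plang n (Dm M) k' l) (M (Suc l) 0)"
          unfolding dsc_def by blast
        from l(2) obtain p c where pc: "x = p @ c" "p \<in> plang n (Dm M) k' l" "c \<in> M (Suc l) 0"
          by (rule concE)
        have "u @ p \<in> bds n M l" unfolding bds_def using uB pc(2) k'n concI by blast
        then have "(u @ p) @ c \<in> gg n M" unfolding gg_def using l(1) pc(3) concI by blast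
        then have "((u @ p) @ c) @ e \<in> ee n M" using er(2) by (rule ee_step)
        then have "(((u @ p) @ c) @ e) @ r \<in> conc (ee n M) (rr n M j)" using er(3) by (rule concI)
        then show ?thesis using xy(1) er(1) pc(1) by simp
      qed
    qed
  next
    fix i' assume ii: "i = Suc i'"
    have i'n: "i' < n" using pl_step.hyps(1) ii by simp
    show "(\<exists>j'. j = Suc j' \<and> u @ v \<in> plang n (Dm M) i' j') \<or> u @ v \<in> conc (dsc n M i') (conc (ee n M) (rr n M j))"
    proof (cases k)
      case 0
      with pl_step.IH have v: "v \<in> conc (ee n M) (rr n M j)" by simp
      have "u \<in> M (Suc i') 0" using pl_step.hyps(3) ii 0 by simp
      moreover have "[] \<in> plang n (Dm M) i' i'" using i'n by (simp add: plang_def pl.pl_refl)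
      ultimately have "[] @ u \<in> dsc n M i'" unfolding dsc_def using i'n concI by blast
      then show ?thesis using v concI by fastforce
    next
      case (Suc k')
      have uD: "u \<in> Dm M i' k'" using pl_step.hyps(3) ii Suc by (simp add: Dm_def)
      have k'n: "k' < n" using pl_step.hyps(2) Suc by simp
      from pl_step.IH Suc have
        "(\<exists>j'. j = Suc j' \<and> v \<in> plang n (Dm M) k' j') \<or> v \<in> conc (dsc n M k') (conc (ee n M) (rr n M j))"
        by simp
      then show ?thesis
      proof
        assume "\<exists>j'. j = Suc j' \<and> v \<in> plang n (Dm M) k' j'"
        then obtain j' where j': "j = Suc j'" "v \<in> plang n (Dm M) k' j'" by blast
        have "pl n (Dm M) i' (u @ v) j'" using j'(2) uD i'n k'n by (auto simp: plang_def intro: pl.pl_step)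
        then show ?thesis using j'(1) by (auto simp: plang_def)
      next
        assume "v \<in> conc (dsc n M k') (conc (ee n M) (rr n M j))"
        then obtain x y where xy: "v = x @ y" "x \<in> dsc n M k'" "y \<in> conc (ee n M) (rr n M j)"
          by (rule concE)
        from xy(2) obtain l where l: "l < n" "x \<in> conc (plang n (Dm M) k' l) (M (Suc l) 0)"
          unfolding dsc_def by blast
        from l(2) obtain p c where pc: "x = p @ c" "p \<in> plang n (Dm M) k' l" "c \<in> M (Suc l) 0"
          by (rule concE)
        have "pl n (Dm M) i' (u @ p) l" using pc(2) uD i'n k'n by (auto simp: plang_def intro: pl.pl_step)
        then have "u @ p \<in> plang n (Dm M) i' l" by (simp add: plang_def)
        then have "(u @ p) @ c \<in> conc (plang n (Dm M) i' l) (M (Suc l) 0)" using pc(3) by (rule concI)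
        then have "(u @ p) @ c \<in> dsc n M i'" unfolding dsc_def using l(1) by blast
        then have "((u @ p) @ c) @ y \<in> conc (dsc n M i') (conc (ee n M) (rr n M j))" using xy(3) by (rule concI)
        then show ?thesis using xy(1) pc(1) by simp
      qed
    qed
  qed
qed


lemma pd_sub: "v \<in> plang n (Dm M) i j \<Longrightarrow> pl (Suc n) M (Suc i) v (Suc j)"
  unfolding plang_def Dm_def using pl_lift by fastforce

lemma bds_sub: "v \<in> bds n M j \<Longrightarrow> pl (Suc n) M 0 v (Suc j)"
proof -
  assume "v \<in> bds n M j"
  then obtain k where k: "k < n" "v \<in> conc (M 0 (Suc k)) (plang n (Dm M) k j)" unfolding bds_def by blast
  from k(2) obtain x p where xp: "v = x @ p" "x \<in> M 0 (Suc k)" "p \<in> plang n (Dm M) k j" by (rule concE)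
  have "pl (Suc n) M 0 x (Suc k)" using k(1) xp(2) by (intro pl_single) auto
  moreover have "pl (Suc n) M (Suc k) p (Suc j)" using xp(3) by (rule pd_sub)
  ultimately show ?thesis using xp(1) pl_trans by blast
qed

lemma dsc_sub: "v \<in> dsc n M i \<Longrightarrow> pl (Suc n) M (Suc i) v 0"
proof -
  assume "v \<in> dsc n M i"
  then obtain k where k: "k < n" "v \<in> conc (plang n (Dm M) i k) (M (Suc k) 0)" unfolding dsc_def by blast
  from k(2) obtain p c where pc: "v = p @ c" "p \<in> plang n (Dm M) i k" "c \<in> M (Suc k) 0" by (rule concE)
  have "pl (Suc n) M (Suc k) c 0" using k(1) pc(3) by (intro pl_single) auto
  moreover have "pl (Suc n) M (Suc i) p (Suc k)" using pc(2) by (rule pd_sub)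
  ultimately show ?thesis using pc(1) pl_trans by blast
qed

lemma gg_sub: "v \<in> gg n M \<Longrightarrow> pl (Suc n) M 0 v 0"
proof -
  assume "v \<in> gg n M"
  then consider "v \<in> M 0 0" | k where "k < n" "v \<in> conc (bds n M k) (M (Suc k) 0)"
    unfolding gg_def by blast
  then show ?thesis
  proof cases
    case 1 then show ?thesis by (intro pl_single) auto
  next
    case 2
    from 2(2) obtain x c where xc: "v = x @ c" "x \<in> bds n M k" "c \<in> M (Suc k) 0" by (rule concE)
    have "pl (Suc n) M (Suc k) c 0" using 2(1) xc(3) by (intro pl_single) auto
    moreover have "pl (Suc n) M 0 x (Suc k)" using xc(2) by (rule bds_sub)
    ultimately show ?thesis using xc(1) pl_trans by blast
  qed
qed

lemma ee_sub: "v \<in> ee n M \<Longrightarrow> pl (Suc n) M 0 v 0"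
  unfolding ee_def using pl_lstar gg_sub by blast

lemma conc_nil_r: "conc A {[]} = A"
  unfolding conc_def by auto

lemma block_00: "plang (Suc n) M 0 0 = ee n M"
proof
  show "plang (Suc n) M 0 0 \<subseteq> ee n M"
    using block_sub[of n M 0 _ 0] by (auto simp: plang_def rr_def conc_nil_r)
  show "ee n M \<subseteq> plang (Suc n) M 0 0" using ee_sub by (auto simp: plang_def)
qed

lemma block_0S: "plang (Suc n) M 0 (Suc j) = conc (ee n M) (bds n M j)"
proof
  show "plang (Suc n) M 0 (Suc j) \<subseteq> conc (ee n M) (bds n M j)"
    using block_sub[of n M 0 _ "Suc j"] by (auto simp: plang_def rr_def)
  show "conc (ee n M) (bds n M j) \<subseteq> plang (Suc n) M 0 (Suc j)"
  proof
    fix w assume "w \<in> conc (ee n M) (bds n M j)"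
    then obtain e x where "w = e @ x" "e \<in> ee n M" "x \<in> bds n M j" by (rule concE)
    then show "w \<in> plang (Suc n) M 0 (Suc j)" using ee_sub bds_sub pl_trans by (fastforce simp: plang_def)
  qed
qed

lemma block_S0: "plang (Suc n) M (Suc i) 0 = conc (dsc n M i) (ee n M)"
proof
  show "plang (Suc n) M (Suc i) 0 \<subseteq> conc (dsc n M i) (ee n M)"
    using block_sub[of n M "Suc i" _ 0] by (auto simp: plang_def rr_def conc_nil_r)
  show "conc (dsc n M i) (ee n M) \<subseteq> plang (Suc n) M (Suc i) 0"
  proof
    fix w assume "w \<in> conc (dsc n M i) (ee n M)"
    then obtain x e where "w = x @ e" "x \<in> dsc n M i" "e \<in> ee n M" by (rule concE)
    then show "w \<in> plang (Suc n) M (Suc i) 0" using ee_sub dsc_sub pl_trans by (fastforce simp: plang_def)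
  qed
qed

lemma block_SS: "plang (Suc n) M (Suc i) (Suc j) =
   plang n (Dm M) i j \<union> conc (dsc n M i) (conc (ee n M) (bds n M j))"
proof
  show "plang (Suc n) M (Suc i) (Suc j) \<subseteq> plang n (Dm M) i j \<union> conc (dsc n M i) (conc (ee n M) (bds n M j))"
    using block_sub[of n M "Suc i" _ "Suc j"] by (auto simp: plang_def rr_def)
  show "plang n (Dm M) i j \<union> conc (dsc n M i) (conc (ee n M) (bds n M j)) \<subseteq> plang (Suc n) M (Suc i) (Suc j)"
  proof
    fix w assume "w \<in> plang n (Dm M) i j \<union> conc (dsc n M i) (conc (ee n M) (bds n M j))"
    then consider "w \<in> plang n (Dm M) i j" | "w \<in> conc (dsc n M i) (conc (ee n M) (bds n M j))" by blast
    then show "w \<in> plang (Suc n) M (Suc i) (Suc j)"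
    proof cases
      case 1 then show ?thesis using pd_sub by (auto simp: plang_def)
    next
      case 2
      then obtain x y where xy: "w = x @ y" "x \<in> dsc n M i" "y \<in> conc (ee n M) (bds n M j)" by (rule concE)
      from xy(3) obtain e z where ez: "y = e @ z" "e \<in> ee n M" "z \<in> bds n M j" by (rule concE)
      have "pl (Suc n) M (Suc i) x 0" using xy(2) by (rule dsc_sub)
      moreover have "pl (Suc n) M 0 e 0" using ez(2) by (rule ee_sub)
      moreover have "pl (Suc n) M 0 z (Suc j)" using ez(3) by (rule bds_sub)
      ultimately have "pl (Suc n) M (Suc i) (x @ (e @ z)) (Suc j)" using pl_trans by metis
      then show ?thesis using xy(1) ez(1) by (simp add: plang_def)
    qed
  qed
qed


lemma reg_UN: "(\<And>k. k < (n::nat) \<Longrightarrow> reg_lang (f k)) \<Longrightarrow> reg_lang (\<Union>k<n. f k)"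
proof (induction n)
  case 0 then show ?case by (simp add: rl_finite)
next
  case (Suc n)
  have "(\<Union>k<Suc n. f k) = (\<Union>k<n. f k) \<union> f n" by (auto simp: lessThan_Suc)
  then show ?case using Suc by (simp add: rl_union)
qed

lemma reg_conc: "reg_lang A \<Longrightarrow> reg_lang B \<Longrightarrow> reg_lang (conc A B)" by (rule rl_conc)

context
  fixes dummy :: "'k::r_dioid itself"
  assumes H: "\<exists>\<theta>. r_congruence \<theta> \<and> (tens_rel :: (('k + delta) list set \<times> _) set) \<subseteq> \<theta>"
begin

lemma t_sum_tcls: "(\<And>k. k < n \<Longrightarrow> f k = tcls (L k) \<and> reg_lang (L k)) \<Longrightarrow>
   t_sum n f = tcls (\<Union>k<n. (L k :: ('k + delta) list set))"
proof (induction n)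
  case 0 then show ?case by (simp add: t_zero_def)
next
  case (Suc n)
  have "(\<Union>k<Suc n. L k) = (\<Union>k<n. L k) \<union> L n" by (auto simp: lessThan_Suc)
  moreover have "reg_lang (\<Union>k<n. L k)" using Suc.prems by (intro reg_UN) auto
  ultimately show ?case using Suc t_plus_tcls[OF H] by simp
qed

lemma mat_star_tcls:
  "(\<And>i j. i < n \<Longrightarrow> j < n \<Longrightarrow> M' i j = tcls (M i j) \<and> reg_lang (M i j)) \<Longrightarrow>
   i < n \<Longrightarrow> j < n \<Longrightarrow>
   mat_star n M' i j = tcls (plang n M i j :: ('k + delta) list set) \<and> reg_lang (plang n M i j)"
proof (induction n arbitrary: M M' i j)
  case 0 then show ?case by simp
next
  case (Suc n)
  note prem = Suc.prems(1)
  let ?Ds = "mat_star n (\<lambda>i j. M' (Suc i) (Suc j))"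
  have Ds: "?Ds i j = tcls (plang n (Dm M) i j) \<and> reg_lang (plang n (Dm M) i j)" if "i < n" "j < n" for i j
    by (rule Suc.IH) (use prem that in \<open>auto simp: Dm_def\<close>)
  have a: "M' 0 0 = tcls (M 0 0)" "reg_lang (M 0 0)" using prem by auto
  have B: "M' 0 (Suc k) = tcls (M 0 (Suc k))" "reg_lang (M 0 (Suc k))" if "k < n" for k
    using prem that by auto
  have C: "M' (Suc k) 0 = tcls (M (Suc k) 0)" "reg_lang (M (Suc k) 0)" if "k < n" for k
    using prem that by auto
  have BD: "t_sum n (\<lambda>k. t_times (M' 0 (Suc k)) (?Ds k j)) = tcls (bds n M j) \<and> reg_lang (bds n M j)"
    if "j < n" for j
  proof
    show "t_sum n (\<lambda>k. t_times (M' 0 (Suc k)) (?Ds k j)) = tcls (bds n M j)"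
      unfolding bds_def
      by (rule t_sum_tcls) (use B Ds that in \<open>auto intro!: reg_conc simp: t_times_tcls[OF H]\<close>)
    show "reg_lang (bds n M j)" unfolding bds_def
      by (rule reg_UN) (use B Ds that in \<open>auto intro!: reg_conc\<close>)
  qed
  have DC: "t_sum n (\<lambda>k. t_times (?Ds i k) (M' (Suc k) 0)) = tcls (dsc n M i) \<and> reg_lang (dsc n M i)"
    if "i < n" for i
  proof
    show "t_sum n (\<lambda>k. t_times (?Ds i k) (M' (Suc k) 0)) = tcls (dsc n M i)"
      unfolding dsc_def
      by (rule t_sum_tcls) (use C Ds that in \<open>auto intro!: reg_conc simp: t_times_tcls[OF H]\<close>)
    show "reg_lang (dsc n M i)" unfolding dsc_def
      by (rule reg_UN) (use C Ds that in \<open>auto intro!: reg_conc\<close>)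
  qed
  have G: "t_sum n (\<lambda>k. t_times (t_sum n (\<lambda>j. t_times (M' 0 (Suc j)) (?Ds j k))) (M' (Suc k) 0))
      = tcls (\<Union>k<n. conc (bds n M k) (M (Suc k) 0))"
    by (rule t_sum_tcls) (use C BD in \<open>auto intro!: reg_conc simp: t_times_tcls[OF H]\<close>)
  have Ureg: "reg_lang (\<Union>k<n. conc (bds n M k) (M (Suc k) 0))"
    by (intro reg_UN reg_conc) (use BD C in auto)
  have Greg: "reg_lang (gg n M)" unfolding gg_def using a(2) Ureg by (rule rl_union)
  have E: "t_star (t_plus (M' 0 0) (t_sum n (\<lambda>k. t_times (t_sum n (\<lambda>j. t_times (M' 0 (Suc j)) (?Ds j k))) (M' (Suc k) 0))))
     = tcls (ee n M)"
    unfolding G ee_def a(1) t_plus_tcls[OF H a(2) Ureg] gg_def[symmetric] t_star_tcls[OF H Greg] ..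
  have Ereg: "reg_lang (ee n M)" unfolding ee_def using Greg by (rule rl_star)
  show ?case
  proof (cases i)
    case 0
    show ?thesis
    proof (cases j)
      case 0
      show ?thesis using \<open>i = 0\<close> 0 E Ereg by (simp add: Let_def block_00)
    next
      case (Suc j')
      then have j': "j' < n" using Suc.prems by simp
      show ?thesis using \<open>i = 0\<close> Suc E Ereg BD[OF j'] 
        by (simp add: Let_def block_0S t_times_tcls[OF H] reg_conc)
    qed
  next
    case (Suc i')
    then have i': "i' < n" using Suc.prems by simp
    show ?thesis
    proof (cases j)
      case 0
      show ?thesis using Suc 0 E Ereg DC[OF i']
        by (simp add: Let_def block_S0 t_times_tcls[OF H] reg_conc)
    next
      case (Suc j')
      then have j': "j' < n" using Suc.prems by simp
      show ?thesis using \<open>i = Suc i'\<close> Suc E Ereg DC[OF i'] BD[OF j'] Ds[OF i' j']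
        by (simp add: Let_def block_SS t_times_tcls[OF H] t_plus_tcls[OF H] reg_conc rl_union)
    qed
  qed
qed

end


definition quot :: "'a list \<Rightarrow> 'a list set \<Rightarrow> 'a list set" where
  "quot u L = {v. u @ v \<in> L}"

lemma quot_nil[simp]: "quot [] Q = Q" by (simp add: quot_def)
lemma quot_quot[simp]: "quot v (quot u Q) = quot (u @ v) Q" by (simp add: quot_def)

lemma lstar_append: "u \<in> lstar L \<Longrightarrow> v \<in> lstar L \<Longrightarrow> u @ v \<in> lstar L"
  by (induction rule: lstar.induct) (auto intro: lstar.intros)

lemma lstar_split: "x \<in> lstar L \<Longrightarrow> x = u @ w \<Longrightarrow>
   (u \<in> lstar L \<and> w \<in> lstar L) \<or> (\<exists>u1 v y z. u = u1 @ v \<and> u1 \<in> lstar L \<and> v @ y \<in> L \<and> w = y @ z \<and> z \<in> lstar L)"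
proof (induction arbitrary: u w rule: lstar.induct)
  case lstar_nil then show ?case by (auto intro: lstar.intros)
next
  case (lstar_step a b)
  from lstar_step.prems obtain us where
    "(a = u @ us \<and> us @ b = w) \<or> (a @ us = u \<and> b = us @ w)"
    by (auto simp: append_eq_append_conv2)
  then show ?case
  proof
    assume h: "a = u @ us \<and> us @ b = w"
    have "u = [] @ u" "[] \<in> lstar L" by (auto intro: lstar.intros)
    then show ?thesis using h lstar_step.hyps by blast
  next
    assume h: "a @ us = u \<and> b = us @ w"
    from lstar_step.IH[of us w] h consider "us \<in> lstar L \<and> w \<in> lstar L"
      | "\<exists>u1 v y z. us = u1 @ v \<and> u1 \<in> lstar L \<and> v @ y \<in> L \<and> w = y @ z \<and> z \<in> lstar L" by blast
    then show ?thesis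
    proof cases
      case 1 then show ?thesis using h lstar_step.hyps(1) by (auto intro: lstar.intros)
    next
      case 2
      then obtain u1 v y z where "us = u1 @ v" "u1 \<in> lstar L" "v @ y \<in> L" "w = y @ z" "z \<in> lstar L" by blast
      moreover have "a @ u1 \<in> lstar L" using lstar_step.hyps(1) \<open>u1 \<in> lstar L\<close> by (rule lstar.intros)
      ultimately show ?thesis using h by (metis append.assoc)
    qed
  qed
qed

definition qs :: "'a list \<Rightarrow> 'a list set \<Rightarrow> 'a list set" where
  "qs u L = \<Union>{quot v L | v. \<exists>u1. u = u1 @ v \<and> u1 \<in> lstar L}"

lemma qs_iff: "y \<in> qs u L \<longleftrightarrow> (\<exists>u1 v. u = u1 @ v \<and> u1 \<in> lstar L \<and> v @ y \<in> L)"
  unfolding qs_def quot_def by blast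

lemma quot_star1: "w \<in> quot u (lstar L) \<Longrightarrow> w \<in> (if u \<in> lstar L then lstar L else {}) \<union> conc (qs u L) (lstar L)"
proof -
  assume "w \<in> quot u (lstar L)"
  then have "u @ w \<in> lstar L" by (simp add: quot_def)
  from lstar_split[OF this refl] consider "u \<in> lstar L" "w \<in> lstar L"
    | "\<exists>u1 v y z. u = u1 @ v \<and> u1 \<in> lstar L \<and> v @ y \<in> L \<and> w = y @ z \<and> z \<in> lstar L" by blast
  then show ?thesis
  proof cases
    case 1 then show ?thesis by simp
  next
    case 2
    then obtain u1 v y z where h: "u = u1 @ v" "u1 \<in> lstar L" "v @ y \<in> L" "w = y @ z" "z \<in> lstar L" by blast
    have "y \<in> qs u L" unfolding qs_iff using h(1-3) by blast
    then have "y @ z \<in> conc (qs u L) (lstar L)" using h(5) by (rule concI)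
    then show ?thesis unfolding h(4) by (rule UnI2)
  qed
qed

lemma quot_star2: "w \<in> (if u \<in> lstar L then lstar L else {}) \<union> conc (qs u L) (lstar L) \<Longrightarrow> w \<in> quot u (lstar L)"
proof -
  assume A: "w \<in> (if u \<in> lstar L then lstar L else {}) \<union> conc (qs u L) (lstar L)"
  show "w \<in> quot u (lstar L)"
  proof (cases "w \<in> conc (qs u L) (lstar L)")
    case False
    then have "w \<in> (if u \<in> lstar L then lstar L else {})" using A by (metis UnE)
    then have "u \<in> lstar L" "w \<in> lstar L" by (auto split: if_splits)
    then show ?thesis by (simp add: quot_def lstar_append)
  next
    case True
    then obtain y z where yz: "w = y @ z" "y \<in> qs u L" "z \<in> lstar L"
      by (rule concE)
    from yz(2) obtain v u1 where h: "u = u1 @ v" "u1 \<in> lstar L" "v @ y \<in> L" unfolding qs_iff by blast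
    have "(v @ y) @ z \<in> lstar L" using h(3) yz(3) by (rule lstar.intros)
    then have "u1 @ ((v @ y) @ z) \<in> lstar L" using h(2) lstar_append by blast
    then show ?thesis using h(1) yz(1) by (simp add: quot_def)
  qed
qed

lemma quot_star: "quot u (lstar L) = (if u \<in> lstar L then lstar L else {}) \<union> conc (qs u L) (lstar L)"
  using quot_star1 quot_star2 by blast

lemma quot_conc: "quot u (conc L M) = conc (quot u L) M \<union> \<Union>{quot v M | v. \<exists>u1. u = u1 @ v \<and> u1 \<in> L}"
proof (intro set_eqI iffI)
  fix w assume "w \<in> quot u (conc L M)"
  then have "u @ w \<in> conc L M" by (simp add: quot_def)
  then obtain x y where xy: "u @ w = x @ y" "x \<in> L" "y \<in> M" by (rule concE)
  then obtain us where "(u = x @ us \<and> us @ w = y) \<or> (u @ us = x \<and> w = us @ y)"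
    by (auto simp: append_eq_append_conv2)
  then show "w \<in> conc (quot u L) M \<union> \<Union>{quot v M | v. \<exists>u1. u = u1 @ v \<and> u1 \<in> L}"
  proof
    assume h: "u = x @ us \<and> us @ w = y"
    then have "w \<in> quot us M" using xy(3) by (simp add: quot_def)
    then have "w \<in> \<Union>{quot v M | v. \<exists>u1. u = u1 @ v \<and> u1 \<in> L}" using h xy(2) by blast
    then show ?thesis by (rule UnI2)
  next
    assume h: "u @ us = x \<and> w = us @ y"
    then have "us \<in> quot u L" using xy(2) by (simp add: quot_def)
    then have "us @ y \<in> conc (quot u L) M" using xy(3) by (rule concI)
    then show ?thesis using h by simp
  qed
next
  fix w assume "w \<in> conc (quot u L) M \<union> \<Union>{quot v M | v. \<exists>u1. u = u1 @ v \<and> u1 \<in> L}"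
  then show "w \<in> quot u (conc L M)"
  proof (rule UnE)
    assume 1: "w \<in> conc (quot u L) M"
    then obtain x y where "w = x @ y" "x \<in> quot u L" "y \<in> M" by (rule concE)
    then have "w = x @ y" "u @ x \<in> L" "y \<in> M" by (auto simp: quot_def)
    then have "(u @ x) @ y \<in> conc L M" by (intro concI)
    then show ?thesis using \<open>w = x @ y\<close> by (simp add: quot_def)
  next
    assume 2: "w \<in> \<Union>{quot v M | v. \<exists>u1. u = u1 @ v \<and> u1 \<in> L}"
    then obtain v u1 where "u = u1 @ v" "u1 \<in> L" "w \<in> quot v M" by blast
    then have "u = u1 @ v" "u1 \<in> L" "v @ w \<in> M" by (auto simp: quot_def)
    then have "u1 @ (v @ w) \<in> conc L M" by (intro concI)
    then show ?thesis using \<open>u = u1 @ v\<close> by (simp add: quot_def)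
  qed
qed

lemma finite_prefixes: "finite L \<Longrightarrow> finite {u. \<exists>v. u @ v \<in> L}"
proof -
  assume f: "finite L"
  have "{u. \<exists>v. u @ v \<in> L} \<subseteq> (\<Union>w\<in>L. (\<lambda>k. take k w) ` {..length w})"
  proof
    fix u assume "u \<in> {u. \<exists>v. u @ v \<in> L}"
    then obtain v where v: "u @ v \<in> L" by blast
    have "u = take (length u) (u @ v)" by simp
    moreover have "length u \<in> {..length (u @ v)}" by simp
    ultimately show "u \<in> (\<Union>w\<in>L. (\<lambda>k. take k w) ` {..length w})" using v by blast
  qed
  moreover have "finite (\<Union>w\<in>L. (\<lambda>k. take k w) ` {..length w})" using f by auto
  ultimately show ?thesis by (rule finite_subset)
qed

lemma finite_range_via: "(\<And>u. \<exists>a\<in>A. f u = g a) \<Longrightarrow> finite A \<Longrightarrow> finite (range f)"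
proof -
  assume h: "\<And>u. \<exists>a\<in>A. f u = g a" and f: "finite A"
  have "range f \<subseteq> g ` A" using h by blast
  moreover have "finite (g ` A)" using f by (rule finite_imageI)
  ultimately show ?thesis by (rule finite_subset)
qed

lemma quot_union: "quot u (L \<union> M) = quot u L \<union> quot u M" by (auto simp: quot_def)

lemma quot_finite: "reg_lang L \<Longrightarrow> finite (range (\<lambda>u. quot u L))"
proof (induction rule: reg_lang.induct)
  case (rl_finite L)
  show ?case
  proof (rule finite_range_via[where g = "\<lambda>x. x" and A = "insert {} ((\<lambda>u. quot u L) ` {u. \<exists>v. u @ v \<in> L})"])
    fix u
    show "\<exists>a\<in>insert {} ((\<lambda>u. quot u L) ` {u. \<exists>v. u @ v \<in> L}). quot u L = a"
    proof (cases "quot u L = {}")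
      case True then show ?thesis by blast
    next
      case False
      then obtain v where "u @ v \<in> L" by (auto simp: quot_def)
      then show ?thesis by blast
    qed
    show "finite (insert {} ((\<lambda>u. quot u L) ` {u. \<exists>v. u @ v \<in> L}))"
      using finite_prefixes[OF rl_finite] by simp
  qed
next
  case (rl_union L M)
  show ?case
  proof (rule finite_range_via[where g = "\<lambda>(A, B). A \<union> B" and A = "range (\<lambda>u. quot u L) \<times> range (\<lambda>u. quot u M)"])
    fix u
    show "\<exists>a\<in>range (\<lambda>u. quot u L) \<times> range (\<lambda>u. quot u M). quot u (L \<union> M) = (\<lambda>(A, B). A \<union> B) a"
      by (rule bexI[of _ "(quot u L, quot u M)"]) (auto simp: quot_union)
    show "finite (range (\<lambda>u. quot u L) \<times> range (\<lambda>u. quot u M))" using rl_union.IH by simp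
  qed
next
  case (rl_conc L M)
  show ?case
  proof (rule finite_range_via[where g = "\<lambda>(A, S). conc A M \<union> \<Union>S" and A = "range (\<lambda>u. quot u L) \<times> Pow (range (\<lambda>u. quot u M))"])
    fix u
    show "\<exists>a\<in>range (\<lambda>u. quot u L) \<times> Pow (range (\<lambda>u. quot u M)). quot u (conc L M) = (\<lambda>(A, S). conc A M \<union> \<Union>S) a"
      by (rule bexI[of _ "(quot u L, {quot v M | v. \<exists>u1. u = u1 @ v \<and> u1 \<in> L})"]) (auto simp: quot_conc)
    show "finite (range (\<lambda>u. quot u L) \<times> Pow (range (\<lambda>u. quot u M)))" using rl_conc.IH by simp
  qed
next
  case (rl_star L)
  show ?case
  proof (rule finite_range_via[where g = "\<lambda>(X, S). X \<union> conc (\<Union>S) (lstar L)" and A = "{{}, lstar L} \<times> Pow (range (\<lambda>u. quot u L))"])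
    fix u
    show "\<exists>a\<in>{{}, lstar L} \<times> Pow (range (\<lambda>u. quot u L)). quot u (lstar L) = (\<lambda>(X, S). X \<union> conc (\<Union>S) (lstar L)) a"
      by (rule bexI[of _ "(if u \<in> lstar L then lstar L else {}, {quot v L | v. \<exists>u1. u = u1 @ v \<and> u1 \<in> lstar L})"])
        (auto simp: quot_star qs_def)
    show "finite ({{}, lstar L} \<times> Pow (range (\<lambda>u. quot u L)))" using rl_star.IH by simp
  qed
qed

lemma lstar_letters: "w \<in> lstar L \<Longrightarrow> set w \<subseteq> \<Union>(set ` L)"
  by (induction rule: lstar.induct) auto

lemma letters_finite: "reg_lang L \<Longrightarrow> finite (\<Union>(set ` L))"
proof (induction rule: reg_lang.induct)
  case (rl_finite L) then show ?case by auto
next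
  case (rl_union L M) then show ?case by auto
next
  case (rl_conc L M)
  have "\<Union>(set ` conc L M) \<subseteq> \<Union>(set ` L) \<union> \<Union>(set ` M)" by (auto simp: conc_def)
  then show ?case using rl_conc finite_subset by blast
next
  case (rl_star L)
  have "\<Union>(set ` lstar L) \<subseteq> \<Union>(set ` L)" using lstar_letters by blast
  then show ?case using rl_star finite_subset by blast
qed


lemma automaton:
  assumes R: "reg_lang L"
  shows "\<exists>n lab T i0 fin. i0 < (n::nat) \<and>
    (\<forall>w. w \<in> L \<longleftrightarrow> (\<exists>j<n. fin j \<and> pl n (\<lambda>i j. if T i j then {[lab j]} else {}) i0 w j))"
proof -
  define Qs where "Qs = insert (L, None) {(quot (u @ [a]) L, Some a) | u a. quot (u @ [a]) L \<noteq> {}}"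
  have "Qs \<subseteq> insert (L, None) (range (\<lambda>u. quot u L) \<times> (Some ` (\<Union>(set ` L))))"
  proof
    fix s assume "s \<in> Qs"
    then consider "s = (L, None)" | u a where "s = (quot (u @ [a]) L, Some a)" "quot (u @ [a]) L \<noteq> {}"
      unfolding Qs_def by blast
    then show "s \<in> insert (L, None) (range (\<lambda>u. quot u L) \<times> (Some ` (\<Union>(set ` L))))"
    proof cases
      case 1 then show ?thesis by blast
    next
      case 2
      then obtain v where "(u @ [a]) @ v \<in> L" by (auto simp: quot_def)
      then have "a \<in> \<Union>(set ` L)" by force
      then show ?thesis using 2(1) by blast
    qed
  qed
  moreover have "finite (insert (L, None) (range (\<lambda>u. quot u L) \<times> (Some ` (\<Union>(set ` L)))))"
    using quot_finite[OF R] letters_finite[OF R] by simp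
  ultimately have fQ: "finite Qs" by (rule finite_subset)
  obtain xs where xs: "set xs = Qs" "distinct xs" using finite_distinct_list[OF fQ] by blast
  define n where "n = length xs"
  define T where "T i j = (case snd (xs ! j) of None \<Rightarrow> False | Some a \<Rightarrow> fst (xs ! j) = quot [a] (fst (xs ! i)))" for i j
  define lab where "lab j = the (snd (xs ! j))" for j
  define fin where "fin j = ([] \<in> fst (xs ! j))" for j
  define Ml where "Ml = (\<lambda>i j. if T i j then {[lab j]} else {})"
  have inv: "\<exists>u. fst (xs ! i) = quot u L" if "i < n" for i
  proof -
    have "xs ! i \<in> Qs" using that xs(1) n_def by auto
    then show ?thesis unfolding Qs_def by (auto intro: exI[of _ "[]"])
  qed
  have "(L, None) \<in> set xs" using xs(1) Qs_def by simp
  then obtain i0 where i0: "i0 < n" "xs ! i0 = (L, None)" by (auto simp: in_set_conv_nth n_def)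
  have fwd: "fst (xs ! j) = quot w (fst (xs ! i))" if "pl n Ml i w j" for i w j
    using that
  proof (induction rule: pl.induct)
    case (pl_refl i) then show ?case by simp
  next
    case (pl_step i k u v j)
    then have Tk: "T i k" and u: "u = [lab k]" by (auto simp: Ml_def split: if_splits)
    then obtain a where a: "snd (xs ! k) = Some a" "fst (xs ! k) = quot [a] (fst (xs ! i))"
      by (auto simp: T_def split: option.splits)
    have "lab k = a" using a(1) by (simp add: lab_def)
    then show ?case using pl_step.IH a(2) u by simp
  qed
  have bwd: "\<forall>i. i < n \<longrightarrow> w \<in> fst (xs ! i) \<longrightarrow> (\<exists>j<n. fin j \<and> pl n Ml i w j)" for w
  proof (induction w)
    case Nil
    show ?case
    proof (intro allI impI)
      fix i assume "i < n" "[] \<in> fst (xs ! i)"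
      then show "\<exists>j<n. fin j \<and> pl n Ml i [] j" by (auto simp: fin_def intro: pl_refl)
    qed
  next
    case (Cons a w)
    show ?case
    proof (intro allI impI)
      fix i assume i: "i < n" "a # w \<in> fst (xs ! i)"
      obtain u where u: "fst (xs ! i) = quot u L" using inv[OF i(1)] by blast
      have wq: "w \<in> quot (u @ [a]) L" using i(2) u by (simp add: quot_def)
      then have "(quot (u @ [a]) L, Some a) \<in> Qs" unfolding Qs_def by blast
      then obtain k where k: "k < n" "xs ! k = (quot (u @ [a]) L, Some a)"
        using xs(1) by (auto simp: in_set_conv_nth n_def)
      have "T i k" using k(2) u by (simp add: T_def)
      moreover have "lab k = a" using k(2) by (simp add: lab_def)
      ultimately have "[a] \<in> Ml i k" by (simp add: Ml_def)
      moreover obtain j where j: "j < n" "fin j" "pl n Ml k w j" using Cons.IH k wq by auto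
      ultimately have "pl n Ml i ([a] @ w) j" using i(1) k(1) by (intro pl_step)
      then show "\<exists>j<n. fin j \<and> pl n Ml i (a # w) j" using j by auto
    qed
  qed
  have "\<forall>w. w \<in> L \<longleftrightarrow> (\<exists>j<n. fin j \<and> pl n Ml i0 w j)"
  proof (intro allI iffI)
    fix w assume "w \<in> L"
    then show "\<exists>j<n. fin j \<and> pl n Ml i0 w j" using bwd[of w] i0 by auto
  next
    fix w assume "\<exists>j<n. fin j \<and> pl n Ml i0 w j"
    then obtain j where "fin j" "pl n Ml i0 w j" by blast
    then have "[] \<in> quot w L" using fwd i0(2) by (auto simp: fin_def)
    then show "w \<in> L" by (simp add: quot_def)
  qed
  then show ?thesis using i0(1) unfolding Ml_def by blast
qed


lemma conc_empty_l: "conc {} A = {}" by (simp add: conc_def)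
lemma conc_nil_l: "conc {[]} A = A" by (simp add: conc_def)

theorem theorem5:
  fixes \<phi> :: "('k::r_dioid + delta) list set set"
  assumes "\<phi> \<in> tensor_carrier"
  shows "\<exists>(n::nat) (S :: nat \<Rightarrow> ('k + delta) list set set) (F :: nat \<Rightarrow> ('k + delta) list set set)
            (U :: 'k tmat) (V :: 'k tmat) (X :: nat \<Rightarrow> nat \<Rightarrow> 'k).
     (\<forall>i<n. S i \<in> {t_zero, t_one}) \<and>
     (\<forall>j<n. F j \<in> {t_zero, t_one}) \<and>
     (\<forall>i<n. \<forall>j<n. U i j \<in> {t_zero, gen Db, gen Dp}) \<and>
     (\<forall>i<n. \<forall>j<n. V i j \<in> {t_zero, gen Dd, gen Dq}) \<and>
     \<phi> = row_mat_col n S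
            (mat_star n (\<lambda>i j. t_plus (t_plus (U i j) (embK (X i j))) (V i j))) F"
proof (cases "\<exists>\<theta>. r_congruence \<theta> \<and> (tens_rel :: (('k + delta) list set \<times> _) set) \<subseteq> \<theta>")
  case False
  then have tc: "(tens_cong :: (('k + delta) list set \<times> _) set) = UNIV" unfolding tc_eq by auto
  obtain x where "\<phi> = tens_cong `` {x}" using assms unfolding tensor_carrier_def by (rule quotientE)
  then have phiU: "\<phi> = UNIV" unfolding tc by blast
  have r: "row_mat_col 0 S M F = (UNIV :: ('k + delta) list set set)" for S M F
    by (auto simp: row_mat_col_def t_zero_def tcls_def tc)
  show ?thesis
    apply (rule exI[of _ 0])
    apply (rule exI[of _ "\<lambda>_. t_zero"], rule exI[of _ "\<lambda>_. t_zero"], rule exI[of _ "\<lambda>_ _. t_zero"],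
       rule exI[of _ "\<lambda>_ _. t_zero"], rule exI[of _ "\<lambda>_ _. 0"])
    using phiU r by simp
next
  case True
  note H = True
  obtain L where L: "\<phi> = tcls L" "reg_lang L" using assms unfolding tensor_carrier_def tcls_def
    by (rule quotientE) simp
  obtain n lab T i0 fin where aut: "i0 < (n::nat)"
    "\<forall>w. w \<in> L \<longleftrightarrow> (\<exists>j<n. fin j \<and> pl n (\<lambda>i j. if T i j then {[lab j]} else {}) i0 w j)"
    using automaton[OF L(2)] by blast
  define Ml where "Ml = (\<lambda>i j. if T i j then {[lab j]} else {})"
  define U :: "'k tmat" where "U i j = (if T i j \<and> lab j = Inr Db then gen Db else if T i j \<and> lab j = Inr Dp then gen Dp else t_zero)" for i j
  define V :: "'k tmat" where "V i j = (if T i j \<and> lab j = Inr Dd then gen Dd else if T i j \<and> lab j = Inr Dq then gen Dq else t_zero)" for i j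
  define X :: "nat \<Rightarrow> nat \<Rightarrow> 'k" where "X i j = (if T i j then (case lab j of Inl k \<Rightarrow> k | Inr _ \<Rightarrow> 0) else 0)" for i j
  define Sl :: "nat \<Rightarrow> ('k + delta) list set" where "Sl i = (if i = i0 then {[]} else {})" for i
  define Fl :: "nat \<Rightarrow> ('k + delta) list set" where "Fl j = (if fin j then {[]} else {})" for j
  define S :: "nat \<Rightarrow> (('k + delta) list set set)" where "S i = (if i = i0 then t_one else t_zero)" for i
  define F :: "nat \<Rightarrow> (('k + delta) list set set)" where "F j = (if fin j then t_one else t_zero)" for j
  have fr: "reg_lang A" if "finite A" for A :: "('k + delta) list set" using that by (rule rl_finite)
  have z0: "embK 0 = (tcls {} :: ('k + delta) list set set)"
    unfolding embK_def by (rule tcls_eq[OF H]) (use tc_rel[OF H] in \<open>auto simp: tens_rel_def\<close>)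
  have ent: "t_plus (t_plus (U i j) (embK (X i j))) (V i j) = tcls (Ml i j) \<and> reg_lang (Ml i j)" for i j
  proof -
    have pl3: "t_plus (t_plus (tcls A) (tcls B)) (tcls C) = tcls (A \<union> B \<union> C)"
      if "finite A" "finite B" "finite C" for A B C :: "('k + delta) list set"
      using that by (simp add: t_plus_tcls[OF H] fr)
    have "reg_lang (Ml i j)" by (rule fr) (simp add: Ml_def)
    moreover have "t_plus (t_plus (U i j) (embK (X i j))) (V i j) = tcls (Ml i j)"
    proof (cases "T i j")
      case False
      then show ?thesis by (simp add: U_def V_def X_def Ml_def z0 t_zero_def pl3)
    next
      case True
      show ?thesis
      proof (cases "lab j")
        case (Inl k)
        then show ?thesis using True
          by (simp add: U_def V_def X_def Ml_def embK_def t_zero_def pl3)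
      next
        case (Inr e)
        then show ?thesis using True
          by (cases e) (simp_all add: U_def V_def X_def Ml_def z0 t_zero_def gen_def pl3)
      qed
    qed
    ultimately show ?thesis by blast
  qed
  let ?M = "\<lambda>i j. t_plus (t_plus (U i j) (embK (X i j))) (V i j)"
  have ms: "mat_star n ?M i j = tcls (plang n Ml i j) \<and> reg_lang (plang n Ml i j)" if "i < n" "j < n" for i j
    by (rule mat_star_tcls[OF H]) (use ent that in auto)
  have S_eq: "S i = tcls (Sl i)" for i by (simp add: S_def Sl_def t_one_def t_zero_def)
  have F_eq: "F j = tcls (Fl j)" for j by (simp add: F_def Fl_def t_one_def t_zero_def)
  have Slr: "reg_lang (Sl i)" for i by (rule fr) (simp add: Sl_def)
  have Flr: "reg_lang (Fl j)" for j by (rule fr) (simp add: Fl_def)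
  have inner: "t_sum n (\<lambda>i. t_times (S i) (mat_star n ?M i j)) = tcls (\<Union>i<n. conc (Sl i) (plang n Ml i j))
     \<and> reg_lang (\<Union>i<n. conc (Sl i) (plang n Ml i j))" if "j < n" for j
  proof
    show "t_sum n (\<lambda>i. t_times (S i) (mat_star n ?M i j)) = tcls (\<Union>i<n. conc (Sl i) (plang n Ml i j))"
      by (rule t_sum_tcls[OF H]) (use ms that Slr in \<open>auto simp: S_eq t_times_tcls[OF H] intro!: reg_conc\<close>)
    show "reg_lang (\<Union>i<n. conc (Sl i) (plang n Ml i j))"
      by (rule reg_UN) (use ms that Slr in \<open>auto intro!: reg_conc\<close>)
  qed
  have outer: "row_mat_col n S (mat_star n ?M) F =
      tcls (\<Union>j<n. conc (\<Union>i<n. conc (Sl i) (plang n Ml i j)) (Fl j))"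
    unfolding row_mat_col_def
    by (rule t_sum_tcls[OF H]) (use inner Flr in \<open>auto simp: F_eq t_times_tcls[OF H] intro!: reg_conc\<close>)
  have "(\<Union>j<n. conc (\<Union>i<n. conc (Sl i) (plang n Ml i j)) (Fl j)) = L"
  proof -
    have a: "(\<Union>i<n. conc (Sl i) (plang n Ml i j)) = plang n Ml i0 j" for j
    proof -
      have "conc (Sl i) (plang n Ml i j) = (if i = i0 then plang n Ml i0 j else {})" for i
        by (simp add: Sl_def conc_nil_l conc_empty_l)
      then show ?thesis using aut(1) by auto
    qed
    have b: "conc (plang n Ml i0 j) (Fl j) = (if fin j then plang n Ml i0 j else {})" for j
      by (simp add: Fl_def conc_nil_r conc_def)
    have "(\<Union>j<n. (if fin j then plang n Ml i0 j else {})) = L"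
      using aut(2) by (auto simp: plang_def Ml_def)
    then show ?thesis by (simp add: a b)
  qed
  then have fin1: "\<phi> = row_mat_col n S (mat_star n ?M) F" using outer L(1) by simp
  have fin2: "(\<forall>i<n. S i \<in> {t_zero, t_one}) \<and> (\<forall>j<n. F j \<in> {t_zero, t_one}) \<and>
     (\<forall>i<n. \<forall>j<n. U i j \<in> {t_zero, gen Db, gen Dp}) \<and> (\<forall>i<n. \<forall>j<n. V i j \<in> {t_zero, gen Dd, gen Dq})"
    by (simp add: S_def F_def U_def V_def)
  show ?thesis
    apply (rule exI[of _ n])
    apply (rule exI[of _ S], rule exI[of _ F], rule exI[of _ U], rule exI[of _ V], rule exI[of _ X])
    using fin1 fin2 by blast
qed


end
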